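(* Let $-1\le t\le s\le n$ and $-1\le k\le n-s-1$ be integers. Let $X$ be an $n$-dimensional projective space over a field and let $K$ be a $k$-dimensional subspace of $X$. For each integer $d$ with $-1\le d\le \min\{k,t\}$, let $\mathcal B_d$ be an $(s-d-1,t-d-1)$-blocking set in the quotient space $X/K$. Then the (disjoint) union $$\mathcal B:=\bigcup_{d=-1}^{\min\{k,t\}}\{T\in \mathrm{Gr}_t(X):\ \dim(K\cap T)=d,\ \langle K,T\rangle\in\mathcal B_d\}$$ is an $(s,t)$-blocking set in $X$.
   Context: Projective dimension is used throughout; the empty subspace has dimension $-1$. For a projective space $Y$ and an integer $d$, $\mathrm{Gr}_d(Y)$ is the set of $d$-dimensional subspaces of $Y$. For $K\in\mathrm{Gr}_k(X)$, the quotient space $X/K$ is the projective space of dimension $\dim X-k-1$ whose $r$-dimensional subspaces ($-1\le r\le \dim X-k-1$) are the $(r+k+1)$-dimensional subspaces of $X$ containing $K$, ordered by inclusion (its unique $(-1)$-dimensional subspace is $K$ itself). $\langle K,T\rangle$ denotes the span of $K$ and $T$, regarded as a subspace of $X/K$. For integers $-1\le t\le s\le \dim Y$, an $(s,t)$-blocking set in a projective space $Y$ is a set $\mathcal B\subseteq\mathrm{Gr}_t(Y)$ such that every $s$-dimensional subspace of $Y$ contains at least one element of $\mathcal B$. *)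

theory Defs
  imports "HOL-Analysis.Analysis"
begin

text \<open>The n-dimensional projective space X = PG(V) over a field 'a is modelled by the
vector space V = 'a^'n with CARD('n) = n + 1. Subspaces of X are linear subspaces of V;
the projective dimension of U is (vector dimension of U) - 1, so the zero subspace has
projective dimension -1.\<close>

definition pdim :: "('a::field ^ 'n) set \<Rightarrow> int" where
  "pdim U = int (vec.dim U) - 1"

definition Gr :: "int \<Rightarrow> ('a::field ^ 'n) set set" where
  "Gr d = {U. vec.subspace U \<and> pdim U = d}"

text \<open>Gr_r(X/K): the r-dimensional subspaces of the quotient X/K, i.e. the
(r + k + 1)-dimensional subspaces of X containing K, where k = pdim K.\<close>
definition Gr_quot :: "('a::field ^ 'n) set \<Rightarrow> int \<Rightarrow> ('a ^ 'n) set set" where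
  "Gr_quot K r = {U. vec.subspace U \<and> K \<subseteq> U \<and> pdim U = r + pdim K + 1}"

definition pjoin :: "('a::field ^ 'n) set \<Rightarrow> ('a ^ 'n) set \<Rightarrow> ('a ^ 'n) set" where
  "pjoin K T = vec.span (K \<union> T)"

definition blocking_set :: "int \<Rightarrow> int \<Rightarrow> ('a::field ^ 'n) set set \<Rightarrow> bool" where
  "blocking_set s t B \<longleftrightarrow> B \<subseteq> Gr t \<and> (\<forall>S \<in> Gr s. \<exists>T \<in> B. T \<subseteq> S)"

text \<open>(s,t)-blocking set in the quotient space X/K (inclusion order of X/K is inclusion in X).\<close>
definition blocking_set_quot ::
    "('a::field ^ 'n) set \<Rightarrow> int \<Rightarrow> int \<Rightarrow> ('a ^ 'n) set set \<Rightarrow> bool" where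
  "blocking_set_quot K s t B \<longleftrightarrow> B \<subseteq> Gr_quot K t \<and> (\<forall>S \<in> Gr_quot K s. \<exists>T \<in> B. T \<subseteq> S)"

end

theory Submission imports Defs begin

lemma vec_extend_subspace:
  fixes A B :: "('a::field ^ 'n) set"
  assumes "vec.subspace A" "vec.subspace B" "A \<subseteq> B" "vec.dim A + j \<le> vec.dim B"
  shows "\<exists>C. vec.subspace C \<and> A \<subseteq> C \<and> C \<subseteq> B \<and> vec.dim C = vec.dim A + j"
  using assms(4)
proof (induction j)
  case 0 then show ?case using assms by auto
next
  case (Suc j)
  then obtain C where C: "vec.subspace C" "A \<subseteq> C" "C \<subseteq> B" "vec.dim C = vec.dim A + j" by force
  have "\<not> B \<subseteq> C"
  proof
    assume "B \<subseteq> C"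
    then have "vec.dim B \<le> vec.dim C" by (rule vec.dim_subset)
    with Suc.prems C show False by linarith
  qed
  then obtain y where y: "y \<in> B" "y \<notin> C" by blast
  have yC: "y \<notin> vec.span C" using y C by (simp add: vec.span_eq_iff[THEN iffD2])
  have "vec.span (insert y C) \<subseteq> B"
    using y C assms(2) by (intro vec.span_minimal) auto
  moreover have "vec.dim (vec.span (insert y C)) = vec.dim C + 1"
    using yC by (simp add: vec.dim_insert)
  ultimately show ?case using C
    by (intro exI[of _ "vec.span (insert y C)"]) (auto intro: vec.span_base)
qed

lemma vec_join_dim:
  fixes U W :: "('a::field ^ 'n) set"
  assumes "vec.subspace U" "vec.subspace W"
  shows "vec.dim (vec.span (U \<union> W)) + vec.dim (U \<inter> W) = vec.dim U + vec.dim W"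
proof -
  have "vec.span (U \<union> W) = {x + y |x y. x \<in> U \<and> y \<in> W}"
    using assms by (simp add: vec.span_Un vec.span_eq_iff[THEN iffD2])
  then show ?thesis using vec.dim_sums_Int[OF assms] by simp
qed


theorem theorem3p8:
  fixes n s t k :: int
    and K :: "('a::field ^ 'n) set"
    and Bd :: "int \<Rightarrow> ('a ^ 'n) set set"
  assumes "int CARD('n) = n + 1"
    and "-1 \<le> t" and "t \<le> s" and "s \<le> n"
    and "-1 \<le> k" and "k \<le> n - s - 1"
    and "K \<in> Gr k"
    and "\<And>d. -1 \<le> d \<Longrightarrow> d \<le> min k t \<Longrightarrow> blocking_set_quot K (s - d - 1) (t - d - 1) (Bd d)"
  shows "blocking_set s t
           (\<Union>d \<in> {-1..min k t}. {T \<in> Gr t. pdim (K \<inter> T) = d \<and> pjoin K T \<in> Bd d})"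
proof -
  have Ks: "vec.subspace K" and Kd: "int (vec.dim K) = k + 1"
    using assms(7) by (auto simp: Gr_def pdim_def)
  show ?thesis
  unfolding blocking_set_def
  proof (intro conjI ballI)
    show "(\<Union>d \<in> {-1..min k t}. {T \<in> Gr t. pdim (K \<inter> T) = d \<and> pjoin K T \<in> Bd d}) \<subseteq> Gr t"
      by blast
  next
    fix S :: "('a ^ 'n) set" assume "S \<in> Gr s"
    then have Ss: "vec.subspace S" and Sd: "int (vec.dim S) = s + 1"
      by (auto simp: Gr_def pdim_def)
    define D where "D = K \<inter> S"
    have Ds: "vec.subspace D" unfolding D_def using Ks Ss by (rule vec.subspace_inter)
    define J where "J = vec.span (K \<union> S)"
    have Js: "vec.subspace J" unfolding J_def by simp
    have Jd: "vec.dim J + vec.dim D = vec.dim K + vec.dim S"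
      unfolding J_def D_def by (rule vec_join_dim[OF Ks Ss])
    have KJ: "K \<subseteq> J" "S \<subseteq> J" unfolding J_def by (auto intro: vec.span_base)
    have DK: "vec.dim D \<le> vec.dim K" unfolding D_def by (rule vec.dim_subset) auto
    have DS: "vec.dim D \<le> vec.dim S" unfolding D_def by (rule vec.dim_subset) auto
    show "\<exists>T\<in>(\<Union>d \<in> {-1..min k t}. {T \<in> Gr t. pdim (K \<inter> T) = d \<and> pjoin K T \<in> Bd d}). T \<subseteq> S"
    proof (cases "int (vec.dim D) \<le> t + 1")
      case True
      define d where "d = int (vec.dim D) - 1"
      have drange: "-1 \<le> d" "d \<le> min k t" using True DK Kd unfolding d_def by auto
      have bq: "blocking_set_quot K (s - d - 1) (t - d - 1) (Bd d)"
        using assms(8) drange by auto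
      have "J \<in> Gr_quot K (s - d - 1)"
        using Js KJ Jd Kd Sd unfolding Gr_quot_def pdim_def d_def by auto
      then obtain U where U: "U \<in> Bd d" "U \<subseteq> J"
        using bq unfolding blocking_set_quot_def by blast
      then have "U \<in> Gr_quot K (t - d - 1)" using bq unfolding blocking_set_quot_def by blast
      then have Us: "vec.subspace U" and KU: "K \<subseteq> U" and Ud: "int (vec.dim U) = t - d + k + 1"
        unfolding Gr_quot_def pdim_def using Kd by auto
      define T where "T = U \<inter> S"
      have Ts: "vec.subspace T" unfolding T_def using Us Ss by (rule vec.subspace_inter)
      have "vec.span (U \<union> S) = J"
      proof (rule antisym)
        show "vec.span (U \<union> S) \<subseteq> J" using U KJ Js by (intro vec.span_minimal) auto
        show "J \<subseteq> vec.span (U \<union> S)" unfolding J_def using KU by (intro vec.span_mono) auto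
      qed
      then have Td: "vec.dim J + vec.dim T = vec.dim U + vec.dim S"
        using vec_join_dim[OF Us Ss] unfolding T_def by simp
      have KT: "K \<inter> T = D" unfolding T_def D_def using KU by auto
      define P where "P = vec.span (K \<union> T)"
      have Pd: "vec.dim P + vec.dim D = vec.dim K + vec.dim T"
        unfolding P_def using vec_join_dim[OF Ks Ts] KT by simp
      have PU: "P \<subseteq> U" unfolding P_def T_def using KU Us by (intro vec.span_minimal) auto
      have "P = U"
        by (rule vec.subspace_dim_equal) (use PU Us Pd Td Jd Ud Kd in \<open>auto simp: P_def d_def\<close>)
      then have "pjoin K T = U" by (simp add: pjoin_def P_def)
      moreover have "T \<in> Gr t" using Ts Td Jd Ud Kd Sd unfolding Gr_def pdim_def d_def by auto
      moreover have "pdim (K \<inter> T) = d" using KT by (simp add: pdim_def d_def)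
      ultimately have "T \<in> {T \<in> Gr t. pdim (K \<inter> T) = d \<and> pjoin K T \<in> Bd d}"
        using U by simp
      then have "T \<in> (\<Union>d \<in> {-1..min k t}. {T \<in> Gr t. pdim (K \<inter> T) = d \<and> pjoin K T \<in> Bd d})"
        using drange by (intro UN_I[of d]) auto
      moreover have "T \<subseteq> S" unfolding T_def by blast
      ultimately show ?thesis by blast
    next
      case False
      have drange: "-1 \<le> t" "t \<le> min k t" using False DK Kd assms(2) by auto
      have bq: "blocking_set_quot K (s - t - 1) (t - t - 1) (Bd t)"
        using assms(8)[of t] drange by linarith
      have "vec.dim K + nat (s - t) \<le> vec.dim (UNIV :: ('a^'n) set)"
        using Kd assms(1,2,3,6) vec_dim_card[where 'a='a and 'n='n] by simp
      then obtain C where C: "vec.subspace C" "K \<subseteq> C" "vec.dim C = vec.dim K + nat (s - t)"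
        using vec_extend_subspace[OF Ks vec.subspace_UNIV, of "nat (s - t)"] by blast
      have "C \<in> Gr_quot K (s - t - 1)"
        using C Kd assms(3) unfolding Gr_quot_def pdim_def by auto
      then obtain U where U: "U \<in> Bd t"
        using bq unfolding blocking_set_quot_def by blast
      then have "U \<in> Gr_quot K (t - t - 1)" using bq unfolding blocking_set_quot_def by blast
      then have Us: "vec.subspace U" and KU: "K \<subseteq> U" and Ud: "vec.dim U = vec.dim K"
        unfolding Gr_quot_def pdim_def using Kd by auto
      have "U = K" using vec.subspace_dim_equal[OF Ks Us KU] Ud by simp
      have z: "vec.subspace {0::'a^'n}" by (simp add: vec.subspace_0)
      have "vec.dim {0::'a^'n} + nat (t + 1) \<le> vec.dim D" using False assms(2) by simp
      moreover have "{0} \<subseteq> D" using Ds by (auto simp: vec.subspace_0)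
      ultimately obtain T where T: "vec.subspace T" "T \<subseteq> D" "vec.dim T = nat (t + 1)"
        using vec_extend_subspace[OF z Ds, of "nat (t + 1)"] by auto
      have KT: "K \<inter> T = T" "T \<subseteq> S" using T unfolding D_def by auto
      have "pjoin K T = K" unfolding pjoin_def using KT Ks
        by (metis Un_absorb2 inf.absorb_iff2 vec.span_eq_iff)
      moreover have "T \<in> Gr t" using T assms(2) unfolding Gr_def pdim_def by auto
      moreover have "pdim (K \<inter> T) = t" using KT T assms(2) by (simp add: pdim_def)
      ultimately have "T \<in> {T' \<in> Gr t. pdim (K \<inter> T') = t \<and> pjoin K T' \<in> Bd t}"
        using U \<open>U = K\<close> by simp
      then have "T \<in> (\<Union>d \<in> {-1..min k t}. {T \<in> Gr t. pdim (K \<inter> T) = d \<and> pjoin K T \<in> Bd d})"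
        using drange by (intro UN_I[of t]) auto
      then show ?thesis using KT by blast
    qed
  qed
qed

end
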